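(* Assume $p=0.5$ and $e_{-1}+e_{+1}<1$. Let $\mathcal F$ be a class of measurable classifiers $f:\mathcal X\to\{-1,+1\}$, and let $\tilde f^*\in\arg\min_{f\in\mathcal F}\mathbb E_{\tilde{\mathcal D}}[\mathbb 1_{\mathrm{peer}}(f(X),\tilde Y)]$. Then $\tilde f^*\in\arg\min_{f\in\mathcal F}R_{\mathcal D}(f)$, where $R_{\mathcal D}(f)=\mathbb P_{(X,Y)\sim\mathcal D}(f(X)\neq Y)$.
   Context: Let $\mathcal X\subseteq\mathbb R^d$ and let $(X,Y)$ be a random pair with distribution $\mathcal D$ on $\mathcal X\times\{-1,+1\}$, with $p:=\mathbb P(Y=+1)$. A noisy label $\tilde Y\in\{-1,+1\}$ is generated with noise rates $e_{+1}:=\mathbb P(\tilde Y=-1\mid Y=+1)$, $e_{-1}:=\mathbb P(\tilde Y=+1\mid Y=-1)$, where $\tilde Y$ is conditionally independent of $X$ given $Y$; $\tilde{\mathcal D}$ is the distribution of $(X,\tilde Y)$. The 0-1 loss is $\mathbb 1(a,b)=1$ if $a\neq b$ and $0$ otherwise. The expected 0-1 peer loss of $f$ on $\tilde{\mathcal D}$ is $$\mathbb E_{\tilde{\mathcal D}}[\mathbb 1_{\mathrm{peer}}(f(X),\tilde Y)]:=\mathbb E[\mathbb 1(f(X),\tilde Y)]-\mathbb E[\mathbb 1(f(X_1),\tilde Y_2)],$$ where $(X,\tilde Y),(X_1,\tilde Y_1),(X_2,\tilde Y_2)$ are i.i.d. draws from $\tilde{\mathcal D}$. *)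

theory Defs
  imports "HOL-Probability.Probability"
begin

text \<open>Labels are encoded as integers in {-1, +1}.\<close>

definition zero_one_loss :: "int \<Rightarrow> int \<Rightarrow> real" where
  "zero_one_loss a b = (if a \<noteq> b then 1 else 0)"

text \<open>Ytil is conditionally independent of X given the discrete label Y
  (for every Borel set A and all labels y, t).\<close>
definition cond_indep_label ::
  "'s measure \<Rightarrow> ('s \<Rightarrow> 'a::topological_space) \<Rightarrow> ('s \<Rightarrow> int) \<Rightarrow> ('s \<Rightarrow> int) \<Rightarrow> bool" where
  "cond_indep_label M X Y Yt \<longleftrightarrow>
     (\<forall>A\<in>sets borel. \<forall>y t.
        measure M {w\<in>space M. X w \<in> A \<and> Y w = y \<and> Yt w = t} * measure M {w\<in>space M. Y w = y}
      = measure M {w\<in>space M. X w \<in> A \<and> Y w = y} * measure M {w\<in>space M. Y w = y \<and> Yt w = t})"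

text \<open>Noise rates e_{+1} = P(Ytil=-1 | Y=+1) and e_{-1} = P(Ytil=+1 | Y=-1).\<close>
definition noise_pos :: "'s measure \<Rightarrow> ('s \<Rightarrow> int) \<Rightarrow> ('s \<Rightarrow> int) \<Rightarrow> real" where
  "noise_pos M Y Yt = measure M {w\<in>space M. Y w = 1 \<and> Yt w = -1} / measure M {w\<in>space M. Y w = 1}"

definition noise_neg :: "'s measure \<Rightarrow> ('s \<Rightarrow> int) \<Rightarrow> ('s \<Rightarrow> int) \<Rightarrow> real" where
  "noise_neg M Y Yt = measure M {w\<in>space M. Y w = -1 \<and> Yt w = 1} / measure M {w\<in>space M. Y w = -1}"

text \<open>Expected 0-1 peer loss of f on a distribution Dt over (x, label):
  E[1(f(X),Ytil)] - E[1(f(X1),Ytil2)] with (X1,Ytil1),(X2,Ytil2) i.i.d. from Dt.\<close>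
definition peer_loss :: "('a \<times> int) measure \<Rightarrow> ('a \<Rightarrow> int) \<Rightarrow> real" where
  "peer_loss Dt f =
     (\<integral>z. zero_one_loss (f (fst z)) (snd z) \<partial>Dt)
     - (\<integral>zz. zero_one_loss (f (fst (fst zz))) (snd (snd zz)) \<partial>(Dt \<Otimes>\<^sub>M Dt))"

definition risk01 :: "('a \<times> int) measure \<Rightarrow> ('a \<Rightarrow> int) \<Rightarrow> real" where
  "risk01 D f = measure D {z\<in>space D. f (fst z) \<noteq> snd z}"

end

theory Submission
  imports Defs
begin

lemma meas_times:
  assumes "prob_space M" "A \<in> sets M" "B \<in> sets M"
  shows "measure (M \<Otimes>\<^sub>M M) (A \<times> B) = measure M A * measure M B"
proof -
  interpret prob_space M by fact
  have "emeasure (M \<Otimes>\<^sub>M M) (A \<times> B) = emeasure M A * emeasure M B"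
    using assms by (intro emeasure_pair_measure_Times) auto
  then show ?thesis by (simp add: measure_def enn2real_mult)
qed

lemma split2:
  assumes "finite_measure M" "{w\<in>space M. P w} \<in> sets M" "{w\<in>space M. Q w} \<in> sets M"
    "\<And>w. w \<in> space M \<Longrightarrow> R w \<longleftrightarrow> P w \<or> Q w" "\<And>w. w \<in> space M \<Longrightarrow> \<not> (P w \<and> Q w)"
  shows "measure M {w\<in>space M. R w} = measure M {w\<in>space M. P w} + measure M {w\<in>space M. Q w}"
proof -
  interpret finite_measure M by fact
  have "{w\<in>space M. R w} = {w\<in>space M. P w} \<union> {w\<in>space M. Q w}" using assms(4) by auto
  moreover have "{w\<in>space M. P w} \<inter> {w\<in>space M. Q w} = {}" using assms(5) by auto
  ultimately show ?thesis using assms(2,3) by (simp add: finite_measure_Union)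
qed

lemma ev_sets:
  assumes "g \<in> M \<rightarrow>\<^sub>M count_space UNIV"
  shows "{w\<in>space M. g w = c} \<in> sets M"
proof -
  have "{w\<in>space M. g w = c} = g -` {c} \<inter> space M" by auto
  then show ?thesis using measurable_sets[OF assms, of "{c}"] by simp
qed

lemma key:
  fixes M :: "'s measure"
    and X :: "'s \<Rightarrow> real ^ 'd"
    and Y Yt :: "'s \<Rightarrow> int"
    and \<X> :: "(real ^ 'd) set"
    and f :: "real ^ 'd \<Rightarrow> int"
  assumes PS: "prob_space M"
    and [measurable]: "X \<in> M \<rightarrow>\<^sub>M borel"
    and [measurable]: "Y \<in> M \<rightarrow>\<^sub>M count_space UNIV"
    and [measurable]: "Yt \<in> M \<rightarrow>\<^sub>M count_space UNIV"
    and vals: "\<forall>w\<in>space M. X w \<in> \<X> \<and> Y w \<in> {-1, 1} \<and> Yt w \<in> {-1, 1}"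
    and CI: "cond_indep_label M X Y Yt"
    and half: "measure M {w\<in>space M. Y w = 1} = 1/2"
    and [measurable]: "f \<in> borel \<rightarrow>\<^sub>M count_space UNIV"
    and fv: "\<forall>x\<in>\<X>. f x \<in> {-1, 1}"
  shows "peer_loss (distr M (borel \<Otimes>\<^sub>M count_space UNIV) (\<lambda>w. (X w, Yt w))) f
     = (1 - noise_neg M Y Yt - noise_pos M Y Yt) *
       (risk01 (distr M (borel \<Otimes>\<^sub>M count_space UNIV) (\<lambda>w. (X w, Y w))) f - 1/2)"
proof -
  interpret prob_space M by fact
  define Pr where "Pr = (\<lambda>P. measure M {w\<in>space M. P w})"
  have FM: "finite_measure M" by unfold_locales
  have fXm: "(\<lambda>w. f (X w)) \<in> M \<rightarrow>\<^sub>M count_space UNIV" by measurable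
  have fX: "\<forall>w\<in>space M. f (X w) \<in> {-1,1}" using vals fv by blast
  define T1 where "T1 = Pr (\<lambda>w. f (X w) \<noteq> Yt w)"
  define T2 where "T2 = Pr (\<lambda>w. f (X w) = 1) * Pr (\<lambda>w. Yt w = -1) + Pr (\<lambda>w. f (X w) = -1) * Pr (\<lambda>w. Yt w = 1)"
  define R where "R = Pr (\<lambda>w. f (X w) \<noteq> Y w)"
  let ?D = "distr M (borel \<Otimes>\<^sub>M count_space UNIV) (\<lambda>w. (X w, Yt w))"
  have gm[measurable]: "(\<lambda>w. (X w, Yt w)) \<in> M \<rightarrow>\<^sub>M (borel \<Otimes>\<^sub>M count_space UNIV)" by measurable
  have l1[measurable]: "(\<lambda>z. zero_one_loss (f (fst z)) (snd z)) \<in> borel_measurable (borel \<Otimes>\<^sub>M count_space UNIV)"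
    unfolding zero_one_loss_def by measurable
  have l2[measurable]: "(\<lambda>zz. zero_one_loss (f (fst (fst zz))) (snd (snd zz))) \<in> borel_measurable ((borel \<Otimes>\<^sub>M count_space UNIV) \<Otimes>\<^sub>M (borel \<Otimes>\<^sub>M count_space UNIV))"
    unfolding zero_one_loss_def by measurable
  have I1: "(\<integral>z. zero_one_loss (f (fst z)) (snd z) \<partial>?D) = T1"
  proof -
    have "(\<integral>z. zero_one_loss (f (fst z)) (snd z) \<partial>?D) = (\<integral>w. zero_one_loss (f (X w)) (Yt w) \<partial>M)"
      using integral_distr[OF gm l1] by simp
    also have "\<dots> = (\<integral>w. indicator {w\<in>space M. f (X w) \<noteq> Yt w} w \<partial>M)"
      by (rule Bochner_Integration.integral_cong) (auto simp: zero_one_loss_def indicator_def)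
    also have "\<dots> = T1" unfolding T1_def Pr_def
      by (simp add: Int_absorb2)
    finally show ?thesis .
  qed
  have I2: "(\<integral>zz. zero_one_loss (f (fst (fst zz))) (snd (snd zz)) \<partial>(?D \<Otimes>\<^sub>M ?D)) = T2"
  proof -
    have sf: "sigma_finite_measure ?D"
      using prob_space_distr[OF gm] prob_space_imp_sigma_finite by blast
    have "?D \<Otimes>\<^sub>M ?D = distr (M \<Otimes>\<^sub>M M) ((borel \<Otimes>\<^sub>M count_space UNIV) \<Otimes>\<^sub>M (borel \<Otimes>\<^sub>M count_space UNIV))
        (\<lambda>(x, y). ((X x, Yt x), (X y, Yt y)))"
      by (rule pair_measure_distr[OF gm gm sf])
    then have "(\<integral>zz. zero_one_loss (f (fst (fst zz))) (snd (snd zz)) \<partial>(?D \<Otimes>\<^sub>M ?D))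
       = (\<integral>p. zero_one_loss (f (X (fst p))) (Yt (snd p)) \<partial>(M \<Otimes>\<^sub>M M))"
      by (simp add: integral_distr case_prod_beta)
    also have "\<dots> = (\<integral>p. indicator ({w\<in>space M. f (X w) = 1} \<times> {w\<in>space M. Yt w = -1}) p
        + indicator ({w\<in>space M. f (X w) = -1} \<times> {w\<in>space M. Yt w = 1}) p \<partial>(M \<Otimes>\<^sub>M M))"
    proof (rule Bochner_Integration.integral_cong)
      fix p assume "p \<in> space (M \<Otimes>\<^sub>M M)"
      then have "fst p \<in> space M" "snd p \<in> space M" by (auto simp: space_pair_measure)
      then show "zero_one_loss (f (X (fst p))) (Yt (snd p)) =
        indicator ({w\<in>space M. f (X w) = 1} \<times> {w\<in>space M. Yt w = -1}) p
        + indicator ({w\<in>space M. f (X w) = -1} \<times> {w\<in>space M. Yt w = 1}) p"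
      proof -
        have "f (X (fst p)) \<in> {-1,1}" "Yt (snd p) \<in> {-1,1}"
          using fX vals \<open>fst p \<in> space M\<close> \<open>snd p \<in> space M\<close> by auto
        then show ?thesis using \<open>fst p \<in> space M\<close> \<open>snd p \<in> space M\<close>
          by (cases p) (auto simp: zero_one_loss_def indicator_def)
      qed
    qed simp
    also have "\<dots> = T2"
    proof -
      interpret PP: pair_prob_space M M by (rule pair_prob_space.intro; (rule pair_sigma_finite.intro)?) (simp_all add: PS prob_space_imp_sigma_finite)
      let ?A1 = "{w\<in>space M. f (X w) = 1}" and ?B1 = "{w\<in>space M. Yt w = -1}"
      let ?A2 = "{w\<in>space M. f (X w) = -1}" and ?B2 = "{w\<in>space M. Yt w = 1}"
      have s: "?A1 \<in> sets M" "?B1 \<in> sets M" "?A2 \<in> sets M" "?B2 \<in> sets M" 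
        using ev_sets[OF fXm] ev_sets[OF assms(4)] by auto
      then have s2: "?A1 \<times> ?B1 \<in> sets (M \<Otimes>\<^sub>M M)" "?A2 \<times> ?B2 \<in> sets (M \<Otimes>\<^sub>M M)" by (auto intro: pair_measureI)
      have i: "integrable (M \<Otimes>\<^sub>M M) (indicator (?A1 \<times> ?B1) :: _ \<Rightarrow> real)"
              "integrable (M \<Otimes>\<^sub>M M) (indicator (?A2 \<times> ?B2) :: _ \<Rightarrow> real)"
        using s2 PP.emeasure_finite by (auto intro!: integrable_real_indicator simp: less_top[symmetric])
      have sp: "?A1 \<times> ?B1 \<inter> space (M \<Otimes>\<^sub>M M) = ?A1 \<times> ?B1" "?A2 \<times> ?B2 \<inter> space (M \<Otimes>\<^sub>M M) = ?A2 \<times> ?B2"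
        by (auto simp: space_pair_measure)
      show ?thesis
        by (simp only: Bochner_Integration.integral_add[OF i] Bochner_Integration.integral_indicator sp meas_times[OF PS s(1,2)]
           meas_times[OF PS s(3,4)] T2_def Pr_def)
    qed
    finally show ?thesis .
  qed
  have IR: "risk01 (distr M (borel \<Otimes>\<^sub>M count_space UNIV) (\<lambda>w. (X w, Y w))) f = R"
  proof -
    have gY: "(\<lambda>w. (X w, Y w)) \<in> M \<rightarrow>\<^sub>M (borel \<Otimes>\<^sub>M count_space UNIV)" by measurable
    have S: "{z\<in>space (borel \<Otimes>\<^sub>M count_space UNIV). f (fst z) \<noteq> snd z} \<in> sets (borel \<Otimes>\<^sub>M count_space UNIV)"
      by measurable
    show ?thesis
      unfolding risk01_def R_def Pr_def
      by (simp only: space_distr measure_distr[OF gY S]) (auto simp: space_pair_measure intro!: arg_cong[where f="measure M"])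
  qed
  have fXs: "\<And>u. {w\<in>space M. f (X w) = u} \<in> sets M" using ev_sets[OF fXm] .
  have Ys: "\<And>u. {w\<in>space M. Y w = u} \<in> sets M" using ev_sets[OF assms(3)] .
  have Yts: "\<And>u. {w\<in>space M. Yt w = u} \<in> sets M" using ev_sets[OF assms(4)] .
  have fYs: "\<And>u y. {w\<in>space M. f (X w) = u \<and> Y w = y} \<in> sets M"
    using sets.sets_Collect_conj[OF fXs Ys] by simp
  have YYts: "\<And>y t. {w\<in>space M. Y w = y \<and> Yt w = t} \<in> sets M"
    using sets.sets_Collect_conj[OF Ys Yts] by simp
  have fYts: "\<And>u t. {w\<in>space M. f (X w) = u \<and> Yt w = t} \<in> sets M"
    using sets.sets_Collect_conj[OF fXs Yts] by simp
  have fYYts: "\<And>u y t. {w\<in>space M. f (X w) = u \<and> Y w = y \<and> Yt w = t} \<in> sets M"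
    using sets.sets_Collect_conj[OF fXs YYts] by simp
  define a where "a = (\<lambda>u y t. Pr (\<lambda>w. f (X w) = u \<and> Y w = y \<and> Yt w = t))"
  define b where "b = (\<lambda>u y. Pr (\<lambda>w. f (X w) = u \<and> Y w = y))"
  define n where "n = (\<lambda>y t. Pr (\<lambda>w. Y w = y \<and> Yt w = t))"
  define py where "py = (\<lambda>y. Pr (\<lambda>w. Y w = y))"
  have ci: "a u y t * py y = b u y * n y t" for u y t
  proof -
    have A: "f -` {u} \<in> sets borel" using measurable_sets[OF assms(8), of "{u}"] by simp
    show ?thesis using CI[unfolded cond_indep_label_def, rule_format, OF A, of y t]
      by (simp add: a_def b_def n_def py_def Pr_def)
  qed
  have vY: "\<And>w. w \<in> space M \<Longrightarrow> Y w = 1 \<or> Y w = -1" using vals by auto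
  have vYt: "\<And>w. w \<in> space M \<Longrightarrow> Yt w = 1 \<or> Yt w = -1" using vals by auto
  have vf: "\<And>w. w \<in> space M \<Longrightarrow> f (X w) = 1 \<or> f (X w) = -1" using fX by auto
  have eT1: "T1 = a 1 1 (-1) + a 1 (-1) (-1) + (a (-1) 1 1 + a (-1) (-1) 1)"
  proof -
    have "T1 = Pr (\<lambda>w. f (X w) = 1 \<and> Yt w = -1) + Pr (\<lambda>w. f (X w) = -1 \<and> Yt w = 1)"
      unfolding T1_def Pr_def by (rule split2[OF FM fYts fYts]; metis vf vYt one_neq_neg_one)
    also have "Pr (\<lambda>w. f (X w) = 1 \<and> Yt w = -1) = a 1 1 (-1) + a 1 (-1) (-1)"
      unfolding a_def Pr_def by (rule split2[OF FM fYYts fYYts]; metis vY one_neq_neg_one)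
    also have "Pr (\<lambda>w. f (X w) = -1 \<and> Yt w = 1) = a (-1) 1 1 + a (-1) (-1) 1"
      unfolding a_def Pr_def by (rule split2[OF FM fYYts fYYts]; metis vY one_neq_neg_one)
    finally show ?thesis .
  qed
  have eR: "R = b 1 (-1) + b (-1) 1"
    unfolding R_def b_def Pr_def by (rule split2[OF FM fYs fYs]; metis vY vf one_neq_neg_one)
  have eF1: "Pr (\<lambda>w. f (X w) = 1) = b 1 1 + b 1 (-1)"
    unfolding b_def Pr_def by (rule split2[OF FM fYs fYs]; metis vY one_neq_neg_one)
  have eFm: "Pr (\<lambda>w. f (X w) = -1) = b (-1) 1 + b (-1) (-1)"
    unfolding b_def Pr_def by (rule split2[OF FM fYs fYs]; metis vY one_neq_neg_one)
  have eYt1: "Pr (\<lambda>w. Yt w = 1) = n 1 1 + n (-1) 1"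
    unfolding n_def Pr_def by (rule split2[OF FM YYts YYts]; metis vY one_neq_neg_one)
  have eYtm: "Pr (\<lambda>w. Yt w = -1) = n 1 (-1) + n (-1) (-1)"
    unfolding n_def Pr_def by (rule split2[OF FM YYts YYts]; metis vY one_neq_neg_one)
  have ep1: "py 1 = n 1 1 + n 1 (-1)"
    unfolding n_def py_def Pr_def by (rule split2[OF FM YYts YYts]; metis vYt one_neq_neg_one)
  have epm: "py (-1) = n (-1) 1 + n (-1) (-1)"
    unfolding n_def py_def Pr_def by (rule split2[OF FM YYts YYts]; metis vYt one_neq_neg_one)
  have eb1: "py 1 = b 1 1 + b (-1) 1"
    unfolding b_def py_def Pr_def by (rule split2[OF FM fYs fYs]; metis vf one_neq_neg_one)
  have ebm: "py (-1) = b 1 (-1) + b (-1) (-1)"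
    unfolding b_def py_def Pr_def by (rule split2[OF FM fYs fYs]; metis vf one_neq_neg_one)
  have p1: "py 1 = 1/2" using half by (simp add: py_def Pr_def)
  have tot: "py 1 + py (-1) = 1"
  proof -
    have "py 1 + py (-1) = Pr (\<lambda>w. True)"
      unfolding py_def Pr_def by (rule split2[OF FM Ys Ys, symmetric]; metis vY one_neq_neg_one)
    then show ?thesis by (simp add: Pr_def prob_space)
  qed
  have pm: "py (-1) = 1/2" using p1 tot by simp
  have "noise_pos M Y Yt = n 1 (-1) / py 1" by (simp add: noise_pos_def n_def py_def Pr_def)
  then have np: "noise_pos M Y Yt = 2 * n 1 (-1)" using p1 by simp
  have "noise_neg M Y Yt = n (-1) 1 / py (-1)" by (simp add: noise_neg_def n_def py_def Pr_def)
  then have nn: "noise_neg M Y Yt = 2 * n (-1) 1" using pm by simp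
  have ci2: "a u y t = 2 * b u y * n y t" if "y = 1 \<or> y = -1" for u y t
  proof -
    have "py y = 1/2" using p1 pm that by auto
    then have h: "a u y t * (1/2) = b u y * n y t" using ci[of u y t] by (simp only:)
    have "a u y t = 2 * (a u y t * (1/2))" by simp
    also have "\<dots> = 2 * (b u y * n y t)" by (simp only: h)
    finally show ?thesis by (simp only: mult.assoc)
  qed
  have r1: "b (-1) 1 = 1/2 - b 1 1" using eb1 p1 by linarith
  have r2: "b (-1) (-1) = 1/2 - b 1 (-1)" using ebm pm by linarith
  have r3: "n 1 1 = 1/2 - n 1 (-1)" using ep1 p1 by linarith
  have r4: "n (-1) (-1) = 1/2 - n (-1) 1" using epm pm by linarith
  show ?thesis
    unfolding peer_loss_def I1 I2 IR np nn T2_def eF1 eFm eYt1 eYtm eT1 eR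
    unfolding ci2[OF disjI1[OF refl]] ci2[OF disjI2[OF refl]]
    unfolding r1 r2 r3 r4 by (simp add: algebra_simps)
qed

theorem theorem2:
  fixes M :: "'s measure"
    and X :: "'s \<Rightarrow> real ^ 'd"
    and Y Yt :: "'s \<Rightarrow> int"
    and \<X> :: "(real ^ 'd) set"
    and F :: "(real ^ 'd \<Rightarrow> int) set"
    and ft :: "real ^ 'd \<Rightarrow> int"
  assumes "prob_space M"
    and "X \<in> M \<rightarrow>\<^sub>M borel"
    and "Y \<in> M \<rightarrow>\<^sub>M count_space UNIV"
    and "Yt \<in> M \<rightarrow>\<^sub>M count_space UNIV"
    and "\<forall>w\<in>space M. X w \<in> \<X> \<and> Y w \<in> {-1, 1} \<and> Yt w \<in> {-1, 1}"
    and "cond_indep_label M X Y Yt"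
    and "measure M {w\<in>space M. Y w = 1} = 1/2"
    and "noise_neg M Y Yt + noise_pos M Y Yt < 1"
    and "\<forall>f\<in>F. f \<in> borel \<rightarrow>\<^sub>M count_space UNIV \<and> (\<forall>x\<in>\<X>. f x \<in> {-1, 1})"
    and "ft \<in> F"
    and "\<forall>f\<in>F. peer_loss (distr M (borel \<Otimes>\<^sub>M count_space UNIV) (\<lambda>w. (X w, Yt w))) ft
                \<le> peer_loss (distr M (borel \<Otimes>\<^sub>M count_space UNIV) (\<lambda>w. (X w, Yt w))) f"
  shows "\<forall>f\<in>F. risk01 (distr M (borel \<Otimes>\<^sub>M count_space UNIV) (\<lambda>w. (X w, Y w))) ft
              \<le> risk01 (distr M (borel \<Otimes>\<^sub>M count_space UNIV) (\<lambda>w. (X w, Y w))) f"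
proof
  fix f assume fF: "f \<in> F"
  let ?Dt = "distr M (borel \<Otimes>\<^sub>M count_space UNIV) (\<lambda>w. (X w, Yt w))"
  let ?D = "distr M (borel \<Otimes>\<^sub>M count_space UNIV) (\<lambda>w. (X w, Y w))"
  let ?c = "1 - noise_neg M Y Yt - noise_pos M Y Yt"
  have fm: "f \<in> borel \<rightarrow>\<^sub>M count_space UNIV" "\<forall>x\<in>\<X>. f x \<in> {-1, 1}" using assms(9) fF by auto
  have ftm: "ft \<in> borel \<rightarrow>\<^sub>M count_space UNIV" "\<forall>x\<in>\<X>. ft x \<in> {-1, 1}" using assms(9,10) by auto
  have kf: "peer_loss ?Dt f = ?c * (risk01 ?D f - 1/2)"
    by (rule key[OF assms(1-7) fm])
  have kft: "peer_loss ?Dt ft = ?c * (risk01 ?D ft - 1/2)"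
    by (rule key[OF assms(1-7) ftm])
  have "peer_loss ?Dt ft \<le> peer_loss ?Dt f" using assms(11) fF by blast
  then have "?c * (risk01 ?D ft - 1/2) \<le> ?c * (risk01 ?D f - 1/2)" using kf kft by simp
  moreover have "?c > 0" using assms(8) by simp
  ultimately have "risk01 ?D ft - 1/2 \<le> risk01 ?D f - 1/2" by (simp add: mult_le_cancel_left_pos)
  then show "risk01 ?D ft \<le> risk01 ?D f" by simp
qed

end
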